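(* For every integer $g\ge 3$, the graph $W'_g$ does not belong to 2-CBU.
   Context: For $g\ge 3$, the double wheel $W^2_g$ is obtained from a cycle $C_g$ of length $g$ by adding two non-adjacent new vertices, each adjacent to every vertex of $C_g$; an edge not contained in $C_g$ is called a ray. $W'_g$ is obtained from $W^2_g$ by subdividing every ray $\lfloor g/2\rfloor$ times (replacing it by a path with $\lfloor g/2\rfloor$ internal vertices); it is planar of girth $g$. Let $e_1,e_2$ be the standard basis of $\mathbb{R}^2$. A graph belongs to 2-CBU if one can assign to each vertex an axis-parallel rectangle (product of two closed intervals of positive length) in $\mathbb{R}^2$ such that the rectangles have pairwise disjoint interiors, two distinct vertices are adjacent iff their rectangles intersect, and any two intersecting rectangles intersect in a segment of positive length orthogonal to $e_1$. *)

theory Defs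
  imports "HOL-Analysis.Analysis"
begin

text \<open>Points of the plane are pairs (x,y) :: real \<times> real, e1 being the x-direction.
  A segment of positive length orthogonal to e1 is a vertical segment {c} \<times> {a..b} with a < b.\<close>

definition is_rect :: "(real \<times> real) set \<Rightarrow> bool" where
  "is_rect R \<longleftrightarrow> (\<exists>a b c d. a < b \<and> c < d \<and> R = {a..b} \<times> {c..d})"

definition is_vertical_segment :: "(real \<times> real) set \<Rightarrow> bool" where
  "is_vertical_segment S \<longleftrightarrow> (\<exists>c a b. a < b \<and> S = {c} \<times> {a..b})"

definition cbu2 :: "'v set \<Rightarrow> ('v \<Rightarrow> 'v \<Rightarrow> bool) \<Rightarrow> bool" where
  "cbu2 V E \<longleftrightarrow> (\<exists>R :: 'v \<Rightarrow> (real \<times> real) set.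
      (\<forall>v\<in>V. is_rect (R v)) \<and>
      (\<forall>u\<in>V. \<forall>v\<in>V. u \<noteq> v \<longrightarrow> interior (R u) \<inter> interior (R v) = {}) \<and>
      (\<forall>u\<in>V. \<forall>v\<in>V. u \<noteq> v \<longrightarrow> (E u v \<longleftrightarrow> R u \<inter> R v \<noteq> {})) \<and>
      (\<forall>u\<in>V. \<forall>v\<in>V. u \<noteq> v \<and> R u \<inter> R v \<noteq> {} \<longrightarrow> is_vertical_segment (R u \<inter> R v)))"

text \<open>Vertices: cycle vertices Cyc i (i < g), the two apexes Apex a (a < 2), and the internal
  vertices Sub a i j (j < g div 2) of the subdivided ray from Apex a to Cyc i, numbered
  from the apex side.\<close>

datatype wv = Cyc nat | Apex nat | Sub nat nat nat

definition wp_verts :: "nat \<Rightarrow> wv set" where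
  "wp_verts g = {Cyc i | i. i < g} \<union> {Apex a | a. a < 2}
     \<union> {Sub a i j | a i j. a < 2 \<and> i < g \<and> j < g div 2}"

fun wp_arc :: "nat \<Rightarrow> wv \<Rightarrow> wv \<Rightarrow> bool" where
  "wp_arc g (Cyc i) (Cyc j) = (i < g \<and> j = Suc i mod g)"
| "wp_arc g (Apex a) (Sub b i j) = (a < 2 \<and> b = a \<and> i < g \<and> j = 0 \<and> 0 < g div 2)"
| "wp_arc g (Sub a i j) (Sub b i' j') =
     (a < 2 \<and> b = a \<and> i' = i \<and> i < g \<and> j' = Suc j \<and> Suc j < g div 2)"
| "wp_arc g (Sub a i j) (Cyc i') = (a < 2 \<and> i < g \<and> i' = i \<and> Suc j = g div 2)"
| "wp_arc g _ _ = False"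

definition wp_adj :: "nat \<Rightarrow> wv \<Rightarrow> wv \<Rightarrow> bool" where
  "wp_adj g u v \<longleftrightarrow> wp_arc g u v \<or> wp_arc g v u"

end

theory Submission
  imports Defs
begin



definition nx :: "nat \<Rightarrow> nat \<Rightarrow> nat" where "nx k i = Suc i mod k"
definition ih :: "real \<Rightarrow> real \<Rightarrow> real \<Rightarrow> bool" where "ih y a c \<longleftrightarrow> min a c \<le> y \<and> y < max a c"
definition cntg :: "nat \<Rightarrow> (nat \<Rightarrow> real) \<Rightarrow> (nat \<Rightarrow> real) \<Rightarrow> real \<Rightarrow> real \<Rightarrow> nat" where
  "cntg k M H x y = (\<Sum>i<k. if M (nx k i) < x \<and> ih y (H i) (H (nx k i)) then 1 else 0)"

lemma sum_rot: "0 < k \<Longrightarrow> (\<Sum>i<k. f (nx k i)) = (\<Sum>i<k. (f i :: nat))"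
proof -
  assume "0 < k"
  then obtain m where k: "k = Suc m" by (cases k) auto
  have "(\<Sum>i<k. f (nx k i)) = (\<Sum>i<m. f (nx k i)) + f (nx k m)" by (simp add: k)
  also have "(\<Sum>i<m. f (nx k i)) = (\<Sum>i<m. f (Suc i))"
    by (rule sum.cong) (auto simp: nx_def k)
  also have "f (nx k m) = f 0" by (simp add: nx_def k)
  also have "(\<Sum>i<m. f (Suc i)) + f 0 = (\<Sum>i<k. f i)" unfolding k sum.lessThan_Suc_shift by simp
  finally show ?thesis .
qed

lemma hmove: "x1 \<le> x2 \<Longrightarrow> cntg k M H x2 y = cntg k M H x1 y
   + (\<Sum>i<k. if x1 \<le> M (nx k i) \<and> M (nx k i) < x2 \<and> ih y (H i) (H (nx k i)) then 1 else 0)"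
  unfolding cntg_def by (subst sum.distrib[symmetric], rule sum.cong) auto

lemma ih_change: "y1 \<le> y2 \<Longrightarrow> (ih y1 a c \<noteq> ih y2 a c) = ((y1 < a \<and> a \<le> y2) \<noteq> (y1 < c \<and> c \<le> y2))"
  unfolding ih_def by (auto simp: min_def max_def)

lemma vmove:
  assumes "0 < k" "y1 \<le> y2"
  shows "even (cntg k M H x y1 + cntg k M H x y2
     + (\<Sum>j<k. if y1 < H j \<and> H j \<le> y2 \<and> (M j < x) \<noteq> (M (nx k j) < x) then 1 else 0))"
proof -
  define X where "X j = (M j < x)" for j
  define J where "J j = (y1 < H j \<and> H j \<le> y2)" for j
  define Dd :: "nat \<Rightarrow> nat" where "Dd j = (if X j \<and> J j then 1 else 0)" for j
  define F :: "nat \<Rightarrow> nat" where "F i = (if X (nx k i) \<and> ih y1 (H i) (H (nx k i)) then 1 else 0)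
     + (if X (nx k i) \<and> ih y2 (H i) (H (nx k i)) then 1 else 0)
     + (if J i \<and> X i \<noteq> X (nx k i) then 1 else 0)" for i
  have lhs: "cntg k M H x y1 + cntg k M H x y2
     + (\<Sum>j<k. if y1 < H j \<and> H j \<le> y2 \<and> (M j < x) \<noteq> (M (nx k j) < x) then 1 else 0) = (\<Sum>i<k. F i)"
    unfolding cntg_def F_def X_def J_def by (simp add: sum.distrib)
  have pw: "even (F i + Dd (nx k i) + Dd i)" for i
  proof -
    have c: "(ih y1 (H i) (H (nx k i)) \<noteq> ih y2 (H i) (H (nx k i))) = (J i \<noteq> J (nx k i))"
      using ih_change[OF assms(2)] unfolding J_def by blast
    show ?thesis unfolding F_def Dd_def using c
      by (cases "X i"; cases "X (nx k i)"; cases "J i"; cases "J (nx k i)";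
          cases "ih y1 (H i) (H (nx k i))"; cases "ih y2 (H i) (H (nx k i))"; simp)
  qed
  have "even (\<Sum>i<k. F i + Dd (nx k i) + Dd i)" by (rule dvd_sum) (use pw in auto)
  also have "(\<Sum>i<k. F i + Dd (nx k i) + Dd i) = (\<Sum>i<k. F i) + 2 * (\<Sum>i<k. Dd i)"
    using sum_rot[OF assms(1), of Dd] by (simp add: sum.distrib)
  finally show ?thesis using lhs by simp
qed



locale rrep =
  fixes V :: "'v set" and E :: "'v \<Rightarrow> 'v \<Rightarrow> bool" and l r b t :: "'v \<Rightarrow> real"
  assumes lr: "v \<in> V \<Longrightarrow> l v < r v" and bt: "v \<in> V \<Longrightarrow> b v < t v"
  and D: "u \<in> V \<Longrightarrow> v \<in> V \<Longrightarrow> u \<noteq> v \<Longrightarrow> \<not>(l u < r v \<and> l v < r u \<and> b u < t v \<and> b v < t u)"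
  and I: "u \<in> V \<Longrightarrow> v \<in> V \<Longrightarrow> u \<noteq> v \<Longrightarrow> l u \<le> r v \<Longrightarrow> l v \<le> r u \<Longrightarrow> b u \<le> t v \<Longrightarrow> b v \<le> t u
     \<Longrightarrow> (r u = l v \<or> r v = l u) \<and> b u < t v \<and> b v < t u"
  and EI: "u \<in> V \<Longrightarrow> v \<in> V \<Longrightarrow> u \<noteq> v \<Longrightarrow> E u v \<Longrightarrow> l u \<le> r v \<and> l v \<le> r u \<and> b u \<le> t v \<and> b v \<le> t u"

lemma box_inter: "({a..b::real} \<times> {c..d::real}) \<inter> ({a'..b'} \<times> {c'..d'}) = {max a a'..min b b'} \<times> {max c c'..min d d'}"
  by auto

lemma vert_seg_coords:
  assumes "is_vertical_segment ({a..b} \<times> {c..d})"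
  shows "a = b \<and> c < (d::real)"
proof -
  from assms obtain x y1 y2 where y: "y1 < y2" and eq: "{a..b} \<times> {c..d} = {x} \<times> {y1..y2}"
    unfolding is_vertical_segment_def by blast
  have "(x,y1) \<in> {a..b} \<times> {c..d}" "(x,y2) \<in> {a..b} \<times> {c..d}" using eq y by auto
  hence ne: "a \<le> b" "c \<le> d" by auto
  have "(a,c) \<in> {x} \<times> {y1..y2}" "(b,c) \<in> {x} \<times> {y1..y2}" using eq ne by (metis atLeastAtMost_iff mem_Sigma_iff order_refl)+
  hence "a = b" by auto
  have "(x,y1) \<in> {a..b} \<times> {c..d}" "(x,y2) \<in> {a..b} \<times> {c..d}" using eq y by auto
  have "c \<le> y1" "y2 \<le> d" using \<open>(x,y1) \<in> _\<close> \<open>(x,y2) \<in> _\<close> by auto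
  with y \<open>a = b\<close> show ?thesis by auto
qed

lemma maxmin_contact: "max (lu::real) lv = min ru rv \<Longrightarrow> lu < ru \<Longrightarrow> lv < rv \<Longrightarrow> ru = lv \<or> rv = lu"
  by (cases "lu \<le> lv"; cases "ru \<le> rv") (simp_all add: max_def min_def)

lemma open_meet: "(lu::real) < ru \<Longrightarrow> lv < rv \<Longrightarrow> lu < rv \<Longrightarrow> lv < ru \<Longrightarrow>
   (max lu lv + min ru rv) / 2 \<in> {lu<..<ru} \<inter> {lv<..<rv}"
proof -
  assume h: "lu < ru" "lv < rv" "lu < rv" "lv < ru"
  have m: "max lu lv < min ru rv" using h by simp
  have "lu \<le> max lu lv" "lv \<le> max lu lv" "min ru rv \<le> ru" "min ru rv \<le> rv" by auto
  thus ?thesis using m by auto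
qed

lemma cbu2_rrep:
  assumes "cbu2 V E"
  shows "\<exists>l r b t. rrep V E l r b t"
proof -
  obtain R :: "'a \<Rightarrow> (real \<times> real) set" where RR:
    "(\<forall>v\<in>V. is_rect (R v)) \<and>
      (\<forall>u\<in>V. \<forall>v\<in>V. u \<noteq> v \<longrightarrow> interior (R u) \<inter> interior (R v) = {}) \<and>
      (\<forall>u\<in>V. \<forall>v\<in>V. u \<noteq> v \<longrightarrow> (E u v \<longleftrightarrow> R u \<inter> R v \<noteq> {})) \<and>
      (\<forall>u\<in>V. \<forall>v\<in>V. u \<noteq> v \<and> R u \<inter> R v \<noteq> {} \<longrightarrow> is_vertical_segment (R u \<inter> R v))"
    using assms unfolding cbu2_def by (elim exE) (rule that)
  have R1: "\<forall>v\<in>V. is_rect (R v)" using RR by (rule conjunct1)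
  have R2: "\<forall>u\<in>V. \<forall>v\<in>V. u \<noteq> v \<longrightarrow> interior (R u) \<inter> interior (R v) = {}" using RR by (elim conjE)
  have R3: "\<forall>u\<in>V. \<forall>v\<in>V. u \<noteq> v \<longrightarrow> (E u v \<longleftrightarrow> R u \<inter> R v \<noteq> {})" using RR by (elim conjE)
  have R4: "\<forall>u\<in>V. \<forall>v\<in>V. u \<noteq> v \<and> R u \<inter> R v \<noteq> {} \<longrightarrow> is_vertical_segment (R u \<inter> R v)" using RR by (elim conjE)
  have "\<forall>v\<in>V. \<exists>q::real\<times>real\<times>real\<times>real. fst q < fst (snd q) \<and> fst (snd (snd q)) < snd (snd (snd q))
      \<and> R v = {fst q..fst (snd q)} \<times> {fst (snd (snd q))..snd (snd (snd q))}"
  proof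
    fix v assume "v \<in> V"
    then obtain a1 b1 c1 d1 where "a1 < b1" "c1 < d1" "R v = {a1..b1} \<times> {c1..d1}"
      using R1 unfolding is_rect_def by blast
    thus "\<exists>q::real\<times>real\<times>real\<times>real. fst q < fst (snd q) \<and> fst (snd (snd q)) < snd (snd (snd q))
      \<and> R v = {fst q..fst (snd q)} \<times> {fst (snd (snd q))..snd (snd (snd q))}"
      by (intro exI[of _ "(a1,b1,c1,d1)"]) simp
  qed
  then have "\<exists>f. \<forall>v\<in>V. fst (f v) < fst (snd (f v)) \<and> fst (snd (snd (f v))) < snd (snd (snd (f v)))
      \<and> R v = {fst (f v)..fst (snd (f v))} \<times> {fst (snd (snd (f v)))..snd (snd (snd (f v)))}"
    by (rule bchoice)
  then obtain f where f0: "\<forall>v\<in>V. fst (f v) < fst (snd (f v)) \<and> fst (snd (snd (f v))) < snd (snd (snd (f v)))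
      \<and> R v = {fst (f v)..fst (snd (f v))} \<times> {fst (snd (snd (f v)))..snd (snd (snd (f v)))}"
    by blast
  have f: "\<And>v. v\<in>V \<Longrightarrow> fst (f v) < fst (snd (f v)) \<and> fst (snd (snd (f v))) < snd (snd (snd (f v)))
      \<and> R v = {fst (f v)..fst (snd (f v))} \<times> {fst (snd (snd (f v)))..snd (snd (snd (f v)))}"
    using f0 by blast
  define l where "l v = fst (f v)" for v
  define r where "r v = fst (snd (f v))" for v
  define b where "b v = fst (snd (snd (f v)))" for v
  define t where "t v = snd (snd (snd (f v)))" for v
  have Rv: "\<And>v. v \<in> V \<Longrightarrow> R v = {l v..r v} \<times> {b v..t v}" and lr: "\<And>v. v\<in>V \<Longrightarrow> l v < r v"
    and bt: "\<And>v. v\<in>V \<Longrightarrow> b v < t v"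
    using f unfolding l_def r_def b_def t_def by auto
  have "rrep V E l r b t"
  proof
    show "\<And>v. v \<in> V \<Longrightarrow> l v < r v" by (rule lr)
    show "\<And>v. v \<in> V \<Longrightarrow> b v < t v" by (rule bt)
  next
    fix u v assume uv: "u \<in> V" "v \<in> V" "u \<noteq> v"
    have "interior (R u) \<inter> interior (R v) = {}" using R2 uv by auto
    hence e: "({l u<..<r u} \<times> {b u<..<t u}) \<inter> ({l v<..<r v} \<times> {b v<..<t v}) = {}"
      using Rv uv by (simp add: interior_Times)
    show "\<not>(l u < r v \<and> l v < r u \<and> b u < t v \<and> b v < t u)"
    proof
      assume h: "l u < r v \<and> l v < r u \<and> b u < t v \<and> b v < t u"
      have "(max (l u) (l v) + min (r u) (r v)) / 2 \<in> {l u<..<r u} \<inter> {l v<..<r v}"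
        using open_meet lr[OF uv(1)] lr[OF uv(2)] h by blast
      moreover have "(max (b u) (b v) + min (t u) (t v)) / 2 \<in> {b u<..<t u} \<inter> {b v<..<t v}"
        using open_meet bt[OF uv(1)] bt[OF uv(2)] h by blast
      ultimately show False using e by blast
    qed
  next
    fix u v assume uv: "u \<in> V" "v \<in> V" "u \<noteq> v"
    assume h: "l u \<le> r v" "l v \<le> r u" "b u \<le> t v" "b v \<le> t u"
    have ne: "R u \<inter> R v \<noteq> {}"
    proof -
      have "(max (l u) (l v), max (b u) (b v)) \<in> R u \<inter> R v"
        using h Rv uv lr[OF uv(1)] lr[OF uv(2)] bt[OF uv(1)] bt[OF uv(2)] by auto
      thus ?thesis by blast
    qed
    have "is_vertical_segment (R u \<inter> R v)" using R4 uv ne by blast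
    hence "is_vertical_segment ({max (l u) (l v)..min (r u) (r v)} \<times> {max (b u) (b v)..min (t u) (t v)})"
      using Rv uv by (simp add: box_inter)
    from vert_seg_coords[OF this]
    have c: "max (l u) (l v) = min (r u) (r v)" "max (b u) (b v) < min (t u) (t v)" by auto
    have "r u = l v \<or> r v = l u" using maxmin_contact[OF c(1) lr[OF uv(1)] lr[OF uv(2)]] .
    moreover have "b u < t v" "b v < t u" using c(2) by auto
    ultimately show "(r u = l v \<or> r v = l u) \<and> b u < t v \<and> b v < t u" by blast
  next
    fix u v assume uv: "u \<in> V" "v \<in> V" "u \<noteq> v" and e: "E u v"
    hence "R u \<inter> R v \<noteq> {}" using R3 by blast
    then obtain x y where "(x,y) \<in> R u" "(x,y) \<in> R v" by auto
    thus "l u \<le> r v \<and> l v \<le> r u \<and> b u \<le> t v \<and> b v \<le> t u" using Rv uv by auto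
  qed
  thus ?thesis by blast
qed


context rrep begin

definition hc :: "'v \<Rightarrow> 'v \<Rightarrow> real" where "hc u v = (max (b u) (b v) + min (t u) (t v)) / 2"
definition mid :: "'v \<Rightarrow> real" where "mid v = (l v + r v) / 2"
definition HH :: "nat \<Rightarrow> (nat \<Rightarrow> 'v) \<Rightarrow> nat \<Rightarrow> real" where "HH k vs j = hc (vs j) (vs (nx k j))"
definition cnt :: "nat \<Rightarrow> (nat \<Rightarrow> 'v) \<Rightarrow> real \<Rightarrow> real \<Rightarrow> nat" where
  "cnt k vs = cntg k (\<lambda>i. mid (vs i)) (HH k vs)"
definition inbox :: "'v \<Rightarrow> real \<Rightarrow> real \<Rightarrow> bool" where
  "inbox w x y \<longleftrightarrow> l w \<le> x \<and> x \<le> r w \<and> b w \<le> y \<and> y \<le> t w"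
definition iscyc :: "nat \<Rightarrow> (nat \<Rightarrow> 'v) \<Rightarrow> bool" where
  "iscyc k vs \<longleftrightarrow> 3 \<le> k \<and> (\<forall>i<k. vs i \<in> V) \<and> (\<forall>i<k. E (vs i) (vs (nx k i))) \<and> inj_on vs {..<k}"

lemma adjc: "u\<in>V \<Longrightarrow> v\<in>V \<Longrightarrow> u\<noteq>v \<Longrightarrow> E u v \<Longrightarrow> (r u = l v \<or> r v = l u) \<and> b u < t v \<and> b v < t u"
  using EI I by blast

lemma hc_sym: "hc u v = hc v u" unfolding hc_def by (simp add: max.commute min.commute)

lemma hc_in: assumes "u\<in>V" "v\<in>V" "u\<noteq>v" "E u v"
  shows "b u < hc u v \<and> hc u v < t u \<and> b v < hc u v \<and> hc u v < t v"
proof -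
  have a: "b u < t v" "b v < t u" using adjc[OF assms] by auto
  have c: "b u < t u" "b v < t v" using bt assms by auto
  have m: "max (b u) (b v) < min (t u) (t v)" using a c by simp
  have "b u \<le> max (b u) (b v)" "b v \<le> max (b u) (b v)" "min (t u) (t v) \<le> t u" "min (t u) (t v) \<le> t v" by auto
  note f = this m
  have aux1: "p < (M + N) / 2" if "p \<le> M" "M < N" for p M N :: real using that by (simp add: field_simps)
  have aux2: "(M + N) / 2 < p" if "N \<le> p" "M < N" for p M N :: real using that by (simp add: field_simps)
  have "b u < (max (b u) (b v) + min (t u) (t v)) / 2" using f aux1 by blast
  moreover have "(max (b u) (b v) + min (t u) (t v)) / 2 < t u" using f aux2 by blast
  moreover have "b v < (max (b u) (b v) + min (t u) (t v)) / 2" using f aux1 by blast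
  moreover have "(max (b u) (b v) + min (t u) (t v)) / 2 < t v" using f aux2 by blast
  ultimately show ?thesis unfolding hc_def by blast
qed

lemma int_box: "v\<in>V \<Longrightarrow> w\<in>V \<Longrightarrow> v\<noteq>w \<Longrightarrow> l v < x \<Longrightarrow> x < r v \<Longrightarrow> b v < y \<Longrightarrow> y < t v \<Longrightarrow> inbox w x y \<Longrightarrow> False"
proof -
  assume h: "v\<in>V" "w\<in>V" "v\<noteq>w" "l v < x" "x < r v" "b v < y" "y < t v" "inbox w x y"
  have "\<not>(l w < r v \<and> l v < r w \<and> b w < t v \<and> b v < t w)" using D[of w v] h by auto
  moreover have "l w < r v" "l v < r w" "b w < t v" "b v < t w" using h unfolding inbox_def by linarith+
  ultimately show False by blast
qed

lemma contact_box: assumes "u\<in>V" "v\<in>V" "w\<in>V" "w\<noteq>u" "w\<noteq>v" "r u = x" "l v = x" "b u < y" "y < t u" "b v < y" "y < t v"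
  "inbox w x y" shows False
proof -
  have ib: "l w \<le> x" "x \<le> r w" "b w \<le> y" "y \<le> t w" using assms(12) unfolding inbox_def by auto
  have lu: "l u < r u" "l v < r v" "l w < r w" using lr[OF assms(1)] lr[OF assms(2)] lr[OF assms(3)] by auto
  show False
  proof (cases "l w < x")
    case True
    have "\<not>(l w < r u \<and> l u < r w \<and> b w < t u \<and> b u < t w)" using D[of w u] assms by auto
    moreover have "l w < r u" "l u < r w" "b w < t u" "b u < t w" using True ib lu assms by linarith+
    ultimately show False by blast
  next
    case False
    have "\<not>(l w < r v \<and> l v < r w \<and> b w < t v \<and> b v < t w)" using D[of w v] assms by auto
    moreover have "l w < r v" "l v < r w" "b w < t v" "b v < t w" using False ib lu assms by linarith+
    ultimately show False by blast
  qed
qed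

lemma nx_lt: "0 < k \<Longrightarrow> nx k i < k" unfolding nx_def by simp

lemma cyc_basic: assumes "iscyc k vs" "i < k"
  shows "0 < k" "vs i \<in> V" "vs (nx k i) \<in> V" "vs i \<noteq> vs (nx k i)" "E (vs i) (vs (nx k i))" "nx k i < k"
proof -
  show k0: "0 < k" using assms unfolding iscyc_def by auto
  show "vs i \<in> V" "E (vs i) (vs (nx k i))" using assms unfolding iscyc_def by auto
  show nl: "nx k i < k" using nx_lt[OF k0] .
  thus "vs (nx k i) \<in> V" using assms unfolding iscyc_def by auto
  have "nx k i \<noteq> i"
  proof
    assume "nx k i = i"
    hence "Suc i mod k = i" unfolding nx_def .
    moreover have "k \<ge> 3" using assms unfolding iscyc_def by auto
    ultimately show False using assms(2)
    proof (cases "Suc i < k")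
      case True thus False using \<open>Suc i mod k = i\<close> by simp
    next
      case False hence "Suc i = k" using assms(2) by simp
      thus False using \<open>Suc i mod k = i\<close> \<open>k \<ge> 3\<close> by auto
    qed
  qed
  thus "vs i \<noteq> vs (nx k i)" using assms nl unfolding iscyc_def inj_on_def by auto
qed

lemma HH_in: assumes "iscyc k vs" "j < k"
  shows "b (vs j) < HH k vs j \<and> HH k vs j < t (vs j) \<and> b (vs (nx k j)) < HH k vs j \<and> HH k vs j < t (vs (nx k j))"
  unfolding HH_def using hc_in cyc_basic[OF assms] by blast

lemma seg: assumes "iscyc k vs" "j < k" "min (mid (vs j)) (mid (vs (nx k j))) < x" "x \<le> max (mid (vs j)) (mid (vs (nx k j)))"
  shows "(l (vs j) < x \<and> x < r (vs j)) \<or> (l (vs (nx k j)) < x \<and> x < r (vs (nx k j)))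
     \<or> (r (vs j) = x \<and> l (vs (nx k j)) = x) \<or> (r (vs (nx k j)) = x \<and> l (vs j) = x)"
proof -
  note cb = cyc_basic[OF assms(1,2)]
  define u where "u = vs j"
  define v where "v = vs (nx k j)"
  have a: "r u = l v \<or> r v = l u" using adjc cb unfolding u_def v_def by blast
  have l1: "l u < r u" "l v < r v" using lr cb unfolding u_def v_def by auto
  have mu: "l u < mid u" "mid u < r u" "l v < mid v" "mid v < r v" using l1 unfolding mid_def by auto
  have x: "min (mid u) (mid v) < x" "x \<le> max (mid u) (mid v)" using assms(3,4) unfolding u_def v_def by auto
  have "(l u < x \<and> x < r u) \<or> (l v < x \<and> x < r v) \<or> (r u = x \<and> l v = x) \<or> (r v = x \<and> l u = x)"
  proof (cases "r u = l v")
    case True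
    hence "mid u < mid v" using mu by linarith
    hence x2: "mid u < x" "x \<le> mid v" using x by (auto simp: min_def max_def)
    show ?thesis
    proof (cases "x < r u")
      case True thus ?thesis using x2 mu by auto
    next
      case False thus ?thesis using x2 mu \<open>r u = l v\<close> by (cases "x = r u") auto
    qed
  next
    case False
    hence ru: "r v = l u" using a by simp
    hence "mid v < mid u" using mu by linarith
    hence x2: "mid v < x" "x \<le> mid u" using x by (auto simp: min_def max_def)
    show ?thesis
    proof (cases "x < r v")
      case True thus ?thesis using x2 mu by auto
    next
      case False thus ?thesis using x2 mu ru by (cases "x = r v") auto
    qed
  qed
  thus ?thesis unfolding u_def v_def .
qed

lemma vertpt: assumes "iscyc k vs" "i < k" "ih y (HH k vs i) (HH k vs (nx k i))"
  shows "l (vs (nx k i)) < mid (vs (nx k i)) \<and> mid (vs (nx k i)) < r (vs (nx k i))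
     \<and> b (vs (nx k i)) < y \<and> y < t (vs (nx k i))"
proof -
  note cb = cyc_basic[OF assms(1,2)]
  have h1: "b (vs (nx k i)) < HH k vs i \<and> HH k vs i < t (vs (nx k i))" using HH_in[OF assms(1,2)] by blast
  have h2: "b (vs (nx k i)) < HH k vs (nx k i) \<and> HH k vs (nx k i) < t (vs (nx k i))" using HH_in[OF assms(1) cb(6)] by blast
  have "l (vs (nx k i)) < r (vs (nx k i))" using lr cb by auto
  moreover have "b (vs (nx k i)) < min (HH k vs i) (HH k vs (nx k i))" "max (HH k vs i) (HH k vs (nx k i)) < t (vs (nx k i))"
    using h1 h2 by auto
  moreover have "min (HH k vs i) (HH k vs (nx k i)) \<le> y" "y < max (HH k vs i) (HH k vs (nx k i))" using assms(3) unfolding ih_def by auto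
  ultimately show ?thesis unfolding mid_def by auto
qed

lemma off_ne: "w \<notin> vs ` {..<k} \<Longrightarrow> i < k \<Longrightarrow> vs i \<noteq> w" by auto

lemma G1h: assumes "iscyc k vs" "w \<in> V" "w \<notin> vs ` {..<k}" "x1 \<le> x2" "inbox w x1 y" "inbox w x2 y"
  shows "cnt k vs x2 y = cnt k vs x1 y"
proof -
  have "(\<Sum>i<k. if x1 \<le> mid (vs (nx k i)) \<and> mid (vs (nx k i)) < x2 \<and> ih y (HH k vs i) (HH k vs (nx k i)) then 1 else 0) = (0::nat)"
  proof (rule sum.neutral, intro ballI)
    fix i assume i: "i \<in> {..<k}"
    show "(if x1 \<le> mid (vs (nx k i)) \<and> mid (vs (nx k i)) < x2 \<and> ih y (HH k vs i) (HH k vs (nx k i)) then 1 else 0) = (0::nat)"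
    proof (rule ccontr)
      assume "\<not> ?thesis"
      hence c: "x1 \<le> mid (vs (nx k i))" "mid (vs (nx k i)) < x2" "ih y (HH k vs i) (HH k vs (nx k i))" by (auto split: if_splits)
      note cb = cyc_basic[OF assms(1)] 
      have ik: "i < k" using i by auto
      note vp = vertpt[OF assms(1) ik c(3)]
      have "inbox w (mid (vs (nx k i))) y" using c assms(5,6) unfolding inbox_def by auto
      thus False using int_box[of "vs (nx k i)" w] vp cb[OF ik] assms(2) off_ne[OF assms(3) cb(6)[OF ik]] by blast
    qed
  qed
  thus ?thesis unfolding cnt_def using hmove[OF assms(4)] by simp
qed

lemma G1v: assumes "iscyc k vs" "w \<in> V" "w \<notin> vs ` {..<k}" "y1 \<le> y2" "inbox w x y1" "inbox w x y2"
  shows "odd (cnt k vs x y1) = odd (cnt k vs x y2)"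
proof -
  note cb = cyc_basic[OF assms(1)]
  have k0: "0 < k" using assms(1) unfolding iscyc_def by auto
  have "(\<Sum>j<k. if y1 < HH k vs j \<and> HH k vs j \<le> y2 \<and> (mid (vs j) < x) \<noteq> (mid (vs (nx k j)) < x) then 1 else 0) = (0::nat)"
  proof (rule sum.neutral, intro ballI)
    fix j assume j: "j \<in> {..<k}"
    hence jk: "j < k" by auto
    show "(if y1 < HH k vs j \<and> HH k vs j \<le> y2 \<and> (mid (vs j) < x) \<noteq> (mid (vs (nx k j)) < x) then 1 else 0) = (0::nat)"
    proof (rule ccontr)
      assume "\<not> ?thesis"
      hence c: "y1 < HH k vs j" "HH k vs j \<le> y2" "(mid (vs j) < x) \<noteq> (mid (vs (nx k j)) < x)" by (auto split: if_splits)
      have mm: "min (mid (vs j)) (mid (vs (nx k j))) < x" "x \<le> max (mid (vs j)) (mid (vs (nx k j)))"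
        using c(3) by (auto simp: min_def max_def)
      have ib: "inbox w x (HH k vs j)" using c assms(5,6) unfolding inbox_def by auto
      have hh: "b (vs j) < HH k vs j \<and> HH k vs j < t (vs j) \<and> b (vs (nx k j)) < HH k vs j \<and> HH k vs j < t (vs (nx k j))"
        using HH_in[OF assms(1) jk] .
      have n1: "vs j \<noteq> w" using off_ne[OF assms(3) jk] .
      have n2: "vs (nx k j) \<noteq> w" using off_ne[OF assms(3) cb(6)[OF jk]] .
      from seg[OF assms(1) jk mm] show False
      proof (elim disjE)
        assume "l (vs j) < x \<and> x < r (vs j)"
        thus False using int_box[of "vs j" w] hh ib n1 cb(2)[OF jk] assms(2) by blast
      next
        assume "l (vs (nx k j)) < x \<and> x < r (vs (nx k j))"
        thus False using int_box[of "vs (nx k j)" w] hh ib n2 cb(3)[OF jk] assms(2) by blast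
      next
        assume "r (vs j) = x \<and> l (vs (nx k j)) = x"
        thus False using contact_box[of "vs j" "vs (nx k j)" w x "HH k vs j"] hh ib n1 n2 cb(2,3)[OF jk] assms(2) by metis
      next
        assume "r (vs (nx k j)) = x \<and> l (vs j) = x"
        thus False using contact_box[of "vs (nx k j)" "vs j" w x "HH k vs j"] hh ib n1 n2 cb(2,3)[OF jk] assms(2) by metis
      qed
    qed
  qed
  thus ?thesis using vmove[OF k0 assms(4), of "\<lambda>i. mid (vs i)" "HH k vs" x] unfolding cnt_def by simp
qed

lemma G1: assumes "iscyc k vs" "w \<in> V" "w \<notin> vs ` {..<k}" "inbox w x1 y1" "inbox w x2 y2"
  shows "odd (cnt k vs x1 y1) = odd (cnt k vs x2 y2)"
proof -
  have m: "inbox w x2 y1" using assms(4,5) unfolding inbox_def by auto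
  have e1: "cnt k vs x1 y1 = cnt k vs x2 y1"
  proof (cases "x1 \<le> x2")
    case True show ?thesis using G1h[OF assms(1,2,3) True assms(4) m] by simp
  next
    case False hence x21: "x2 \<le> x1" by simp
    show ?thesis using G1h[OF assms(1,2,3) x21 m assms(4)] by simp
  qed
  have e2: "odd (cnt k vs x2 y1) = odd (cnt k vs x2 y2)"
  proof (cases "y1 \<le> y2")
    case True show ?thesis using G1v[OF assms(1,2,3) True m assms(5)] by simp
  next
    case False hence y21: "y2 \<le> y1" by simp
    show ?thesis using G1v[OF assms(1,2,3) y21 assms(5) m] by simp
  qed
  show ?thesis using e1 e2 by simp
qed


lemma nx_neq: assumes "3 \<le> k" "i < k" shows "nx k i \<noteq> i"
proof
  assume h: "nx k i = i"
  show False
  proof (cases "Suc i < k")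
    case True thus False using h by (simp add: nx_def)
  next
    case False hence "Suc i = k" using assms(2) by simp
    thus False using h assms(1) by (auto simp: nx_def)
  qed
qed

lemma nx_inj: assumes "i < k" "j < k" "nx k i = nx k j" shows "i = j"
proof -
  have s: "Suc i \<le> k" "Suc j \<le> k" using assms by auto
  show ?thesis
  proof (cases "Suc i = k")
    case True
    hence "Suc j mod k = 0" using assms(3) by (simp add: nx_def)
    hence "Suc j = k" using s(2) by (metis Suc_le_lessD le_neq_implies_less mod_less nat.simps(3))
    thus ?thesis using True by simp
  next
    case False
    hence "Suc i < k" using s by simp
    hence "Suc j mod k = Suc i" using assms(3) by (simp add: nx_def)
    thus ?thesis using s(2) \<open>Suc i < k\<close> by (metis Suc_inject le_neq_implies_less mod_less mod_self nat.simps(3))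
  qed
qed

lemma cyc_inj: "iscyc k vs \<Longrightarrow> i < k \<Longrightarrow> j < k \<Longrightarrow> vs i = vs j \<Longrightarrow> i = j"
  unfolding iscyc_def inj_on_def by auto

lemma sum2: assumes "i0 < (k::nat)" "j0 < k" "i0 \<noteq> j0"
  and "\<And>j. j < k \<Longrightarrow> f j = (if j = i0 then A else 0) + (if j = j0 then B else (0::nat))"
  shows "(\<Sum>j<k. f j) = A + B"
proof -
  have "(\<Sum>j<k. f j) = (\<Sum>j<k. (if j = i0 then A else 0) + (if j = j0 then B else 0))"
    using assms(4) by (intro sum.cong) auto
  also have "\<dots> = (\<Sum>j<k. if j = i0 then A else 0) + (\<Sum>j<k. if j = j0 then B else 0)" by (simp add: sum.distrib)
  also have "(\<Sum>j<k. if j = i0 then A else 0) = A" using sum.delta[of "{..<k}" i0 "\<lambda>_. A"] assms(1) by simp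
  also have "(\<Sum>j<k. if j = j0 then B else 0) = B" using sum.delta[of "{..<k}" j0 "\<lambda>_. B"] assms(2) by simp
  finally show ?thesis .
qed

lemma local_side:
  assumes cyc: "iscyc k vs" and i0: "i0 < k" "j0 < k" "nx k j0 = i0"
    and uV: "u \<in> V" and off: "u \<notin> vs ` {..<k}" and adj: "E u (vs i0)"
    and X: "X = l (vs i0) \<or> X = r (vs i0)"
    and side: "\<And>e. e \<in> V \<Longrightarrow> sd e \<longleftrightarrow> (if X = l (vs i0) then r e = X else l e = X)"
  shows "odd (cnt k vs X (hc (vs i0) u)) = (odd (cnt k vs X (t (vs i0))) \<noteq>
     odd ((if hc (vs i0) u < HH k vs i0 \<and> sd (vs (nx k i0)) then 1 else 0)
        + (if hc (vs i0) u < HH k vs j0 \<and> sd (vs j0) then 1 else (0::nat))))"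
proof -
  define Q where "Q = vs i0"
  define y1 where "y1 = hc Q u"
  have k3: "3 \<le> k" and k0: "0 < k" using cyc unfolding iscyc_def by auto
  note cb0 = cyc_basic[OF cyc i0(1)] and cbj = cyc_basic[OF cyc i0(2)]
  have QV: "Q \<in> V" using cb0 Q_def by auto
  have uQ: "u \<noteq> Q" using off i0 Q_def by auto
  have hcq: "b Q < y1 \<and> y1 < t Q" using hc_in[OF uV QV uQ adj[folded Q_def]] hc_sym unfolding y1_def by auto
  have lQ: "l Q < r Q" using lr QV by auto
  have midQ: "l Q < mid Q" "mid Q < r Q" using lQ unfolding mid_def by (auto simp: field_simps)
  have ij: "i0 \<noteq> j0" using nx_neq[OF k3 i0(2)] i0(3) by auto
  have nxj0: "vs (nx k j0) = Q" using i0(3) Q_def by simp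
  have ibQ: "inbox Q X y" if "b Q < y" "y \<le> t Q" for y using that X lQ unfolding inbox_def Q_def by auto
  have sdX: "sd e \<longleftrightarrow> (if X = l Q then r e = X else l e = X)" if "e \<in> V" for e using side[OF that] Q_def by simp
  have mids: "l e < mid e \<and> mid e < r e" if "e \<in> V" for e using lr[OF that] unfolding mid_def by (auto simp: field_simps)
  have notQ: "vs j \<noteq> Q" if "j < k" "j \<noteq> i0" for j using cyc_inj[OF cyc that(1) i0(1)] that Q_def by auto
  define A :: nat where "A = (if y1 < HH k vs i0 \<and> sd (vs (nx k i0)) then 1 else 0)"
  define B :: nat where "B = (if y1 < HH k vs j0 \<and> sd (vs j0) then 1 else 0)"
  have XX: "X \<noteq> l Q \<Longrightarrow> X = r Q" using X Q_def by auto
  have pw: "(if y1 < HH k vs j \<and> HH k vs j \<le> t Q \<and> (mid (vs j) < X) \<noteq> (mid (vs (nx k j)) < X) then 1 else 0)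
      = (if j = i0 then A else 0) + (if j = j0 then B else 0)" if jk: "j < k" for j
  proof -
    note cb = cyc_basic[OF cyc jk]
    have hh: "b (vs j) < HH k vs j \<and> HH k vs j < t (vs j) \<and> b (vs (nx k j)) < HH k vs j \<and> HH k vs j < t (vs (nx k j))"
      using HH_in[OF cyc jk] .
    have mj: "l (vs j) < mid (vs j) \<and> mid (vs j) < r (vs j)" "l (vs (nx k j)) < mid (vs (nx k j)) \<and> mid (vs (nx k j)) < r (vs (nx k j))"
      using mids cb by auto
    have lrj: "l (vs j) < r (vs j)" "l (vs (nx k j)) < r (vs (nx k j))" using lr cb by auto
    have cross: "vs j = Q \<and> (if X = l Q then r (vs (nx k j)) = X else l (vs (nx k j)) = X)
        \<or> vs (nx k j) = Q \<and> (if X = l Q then r (vs j) = X else l (vs j) = X)"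
      if c: "y1 < HH k vs j" "HH k vs j \<le> t Q" "(mid (vs j) < X) \<noteq> (mid (vs (nx k j)) < X)"
    proof -
      have mm: "min (mid (vs j)) (mid (vs (nx k j))) < X" "X \<le> max (mid (vs j)) (mid (vs (nx k j)))"
        using c(3) by (auto simp: min_def max_def)
      have ib: "inbox Q X (HH k vs j)" using ibQ c hcq by auto
      from seg[OF cyc jk mm] show ?thesis
      proof (elim disjE)
        assume h: "l (vs j) < X \<and> X < r (vs j)"
        show ?thesis
        proof (cases "vs j = Q")
          case True thus ?thesis using h X Q_def by auto
        next
          case False thus ?thesis using int_box[of "vs j" Q X "HH k vs j"] h hh ib cb QV by blast
        qed
      next
        assume h: "l (vs (nx k j)) < X \<and> X < r (vs (nx k j))"
        show ?thesis
        proof (cases "vs (nx k j) = Q")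
          case True thus ?thesis using h X Q_def by auto
        next
          case False thus ?thesis using int_box[of "vs (nx k j)" Q X "HH k vs j"] h hh ib cb QV by blast
        qed
      next
        assume h: "r (vs j) = X \<and> l (vs (nx k j)) = X"
        show ?thesis
        proof (cases "vs j = Q \<or> vs (nx k j) = Q")
          case True thus ?thesis using h X lQ Q_def by auto
        next
          case False thus ?thesis using contact_box[of "vs j" "vs (nx k j)" Q X "HH k vs j"] h hh ib cb QV by blast
        qed
      next
        assume h: "r (vs (nx k j)) = X \<and> l (vs j) = X"
        show ?thesis
        proof (cases "vs j = Q \<or> vs (nx k j) = Q")
          case True thus ?thesis using h X lQ Q_def by auto
        next
          case False thus ?thesis using contact_box[of "vs (nx k j)" "vs j" Q X "HH k vs j"] h hh ib cb QV by blast
        qed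
      qed
    qed
    show ?thesis
    proof (cases "j = i0")
      case True
      hence vj: "vs j = Q" using Q_def by simp
      have e1V: "vs (nx k j) \<in> V" using cb by auto
      show ?thesis
      proof (cases "sd (vs (nx k j))")
        case True
        have s: "if X = l Q then r (vs (nx k j)) = X else l (vs (nx k j)) = X" using sdX[OF e1V] True by simp
        have "HH k vs j \<le> t Q" using hh vj by auto
        moreover have "(mid (vs j) < X) \<noteq> (mid (vs (nx k j)) < X)"
          using s vj midQ mj(2) XX by (cases "X = l Q") auto
        ultimately show ?thesis unfolding A_def using True \<open>j = i0\<close> ij by auto
      next
        case False
        have "\<not> (y1 < HH k vs j \<and> HH k vs j \<le> t Q \<and> (mid (vs j) < X) \<noteq> (mid (vs (nx k j)) < X))"
        proof
          assume c: "y1 < HH k vs j \<and> HH k vs j \<le> t Q \<and> (mid (vs j) < X) \<noteq> (mid (vs (nx k j)) < X)"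
          have "vs (nx k j) \<noteq> Q" using cb vj by auto
          thus False using cross c False sdX[OF e1V] vj by auto
        qed
        thus ?thesis unfolding A_def using False \<open>j = i0\<close> ij by auto
      qed
    next
      case False
      note ni0 = False
      show ?thesis
      proof (cases "j = j0")
        case True
        hence vj: "vs (nx k j) = Q" using nxj0 by simp
        have e2V: "vs j \<in> V" using cb by auto
        have vjQ: "vs j \<noteq> Q" using notQ[OF jk ni0] .
        show ?thesis
        proof (cases "sd (vs j)")
          case True
          have s: "if X = l Q then r (vs j) = X else l (vs j) = X" using sdX[OF e2V] True by simp
          have "HH k vs j \<le> t Q" using hh vj by auto
          moreover have "(mid (vs j) < X) \<noteq> (mid (vs (nx k j)) < X)"
            using s vj midQ mj(1) XX by (cases "X = l Q") auto
          ultimately show ?thesis unfolding B_def using True \<open>j = j0\<close> ni0 by auto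
        next
          case False
          have "\<not> (y1 < HH k vs j \<and> HH k vs j \<le> t Q \<and> (mid (vs j) < X) \<noteq> (mid (vs (nx k j)) < X))"
          proof
            assume c: "y1 < HH k vs j \<and> HH k vs j \<le> t Q \<and> (mid (vs j) < X) \<noteq> (mid (vs (nx k j)) < X)"
            thus False using cross c False sdX[OF e2V] vj vjQ by auto
          qed
          thus ?thesis unfolding B_def using False \<open>j = j0\<close> ni0 by auto
        qed
      next
        case False
        have vjQ: "vs j \<noteq> Q" using notQ[OF jk ni0] .
        have "nx k j \<noteq> i0" using nx_inj[OF jk i0(2)] i0(3) False by auto
        hence vnQ: "vs (nx k j) \<noteq> Q" using notQ[OF cb(6)] by auto
        have "\<not> (y1 < HH k vs j \<and> HH k vs j \<le> t Q \<and> (mid (vs j) < X) \<noteq> (mid (vs (nx k j)) < X))"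
          using cross vjQ vnQ by blast
        thus ?thesis using False ni0 by auto
      qed
    qed
  qed
  have S: "(\<Sum>j<k. if y1 < HH k vs j \<and> HH k vs j \<le> t Q \<and> (mid (vs j) < X) \<noteq> (mid (vs (nx k j)) < X) then 1 else 0) = A + B"
    by (rule sum2[OF i0(1,2) ij]) (rule pw)
  have "even (cnt k vs X y1 + cnt k vs X (t Q) + (A + B))"
    using vmove[OF k0, of y1 "t Q" "\<lambda>i. mid (vs i)" "HH k vs" X] hcq S unfolding cnt_def by simp
  hence "odd (cnt k vs X y1) = (odd (cnt k vs X (t Q)) \<noteq> odd (A + B))" by auto
  thus ?thesis unfolding A_def B_def y1_def Q_def .
qed

lemma top_move: assumes cyc: "iscyc k vs" "i0 < k"
  shows "cnt k vs (r (vs i0)) (t (vs i0)) = cnt k vs (l (vs i0)) (t (vs i0))"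
proof -
  define Q where "Q = vs i0"
  have QV: "Q \<in> V" using cyc_basic[OF assms] Q_def by auto
  have lQ: "l Q < r Q" using lr QV by auto
  have "(\<Sum>i<k. if l Q \<le> mid (vs (nx k i)) \<and> mid (vs (nx k i)) < r Q \<and> ih (t Q) (HH k vs i) (HH k vs (nx k i)) then 1 else 0) = (0::nat)"
  proof (rule sum.neutral, intro ballI)
    fix i assume "i \<in> {..<k}" hence ik: "i < k" by auto
    note cb = cyc_basic[OF cyc(1) ik]
    show "(if l Q \<le> mid (vs (nx k i)) \<and> mid (vs (nx k i)) < r Q \<and> ih (t Q) (HH k vs i) (HH k vs (nx k i)) then 1 else 0) = (0::nat)"
    proof (rule ccontr)
      assume "\<not> ?thesis"
      hence c: "l Q \<le> mid (vs (nx k i))" "mid (vs (nx k i)) < r Q" "ih (t Q) (HH k vs i) (HH k vs (nx k i))" by (auto split: if_splits)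
      note vp = vertpt[OF cyc(1) ik c(3)]
      have ib: "inbox Q (mid (vs (nx k i))) (t Q)" using c bt[OF QV] unfolding inbox_def by auto
      show False
      proof (cases "vs (nx k i) = Q")
        case True thus False using vp by auto
      next
        case False thus False using int_box[of "vs (nx k i)" Q] vp ib cb QV by blast
      qed
    qed
  qed
  thus ?thesis using hmove[OF less_imp_le[OF lQ[unfolded Q_def]], of k "\<lambda>i. mid (vs i)" "HH k vs" "t (vs i0)"] unfolding cnt_def Q_def by simp
qed


lemma nb_side: assumes "e \<in> V" "Q \<in> V" "e \<noteq> Q" "E e Q \<or> E Q e"
  shows "(r e = l Q) \<noteq> (l e = r Q)"
proof -
  have "r e = l Q \<or> r Q = l e" using adjc[OF assms(1,2,3)] adjc[OF assms(2,1) assms(3)[symmetric]] assms(4) by blast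
  moreover have "\<not> (r e = l Q \<and> l e = r Q)" using lr[OF assms(1)] lr[OF assms(2)] by auto
  ultimately show ?thesis by auto
qed

lemma local_formula:
  assumes cyc: "iscyc k vs" and i0: "i0 < k" "j0 < k" "nx k j0 = i0"
    and uV: "u \<in> V" and off: "u \<notin> vs ` {..<k}" and adj: "E u (vs i0)"
  shows "odd (cnt k vs (l u) (b u)) = (odd (cnt k vs (l (vs i0)) (t (vs i0))) \<noteq>
    ((hc (vs i0) u < hc (vs i0) (vs (nx k i0)) \<and> (r (vs (nx k i0)) = l (vs i0)) = (r u = l (vs i0)))
     \<noteq> (hc (vs i0) u < hc (vs i0) (vs j0) \<and> (r (vs j0) = l (vs i0)) = (r u = l (vs i0)))))"
proof -
  define Q where "Q = vs i0"
  note cb0 = cyc_basic[OF cyc i0(1)] and cbj = cyc_basic[OF cyc i0(2)]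
  have QV: "Q \<in> V" using cb0 Q_def by auto
  have uQ: "u \<noteq> Q" using off i0 Q_def by auto
  have e1: "vs (nx k i0) \<in> V" "vs (nx k i0) \<noteq> Q" "E Q (vs (nx k i0))" using cb0 Q_def by auto
  have e2: "vs j0 \<in> V" "vs j0 \<noteq> Q" "E (vs j0) Q" using cbj i0(3) Q_def by auto
  have hu: "b u < hc Q u \<and> hc Q u < t u" using hc_in[OF uV QV uQ adj[folded Q_def]] hc_sym by auto
  have H1: "HH k vs i0 = hc Q (vs (nx k i0))" unfolding HH_def Q_def ..
  have H2: "HH k vs j0 = hc Q (vs j0)" unfolding HH_def Q_def using i0(3) hc_sym by simp
  have lQ: "l Q < r Q" using lr QV by auto
  have su: "(r u = l Q) \<noteq> (l u = r Q)" using nb_side[OF uV QV uQ] adj Q_def by auto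
  have s1: "(r (vs (nx k i0)) = l Q) \<noteq> (l (vs (nx k i0)) = r Q)" using nb_side[OF e1(1) QV e1(2)] e1(3) by auto
  have s2: "(r (vs j0) = l Q) \<noteq> (l (vs j0) = r Q)" using nb_side[OF e2(1) QV e2(2)] e2(3) by auto
  have oddAB: "odd ((if P1 then 1 else 0) + (if P2 then 1 else (0::nat))) = (P1 \<noteq> P2)" for P1 P2 by auto
  show ?thesis
  proof (cases "r u = l Q")
    case True
    have p1: "l Q = l (vs i0) \<or> l Q = r (vs i0)" using Q_def by simp
    have p2: "(r e = l Q) \<longleftrightarrow> (if l Q = l (vs i0) then r e = l Q else l e = l Q)" if "e \<in> V" for e using Q_def by simp
    have L: "odd (cnt k vs (l Q) (hc Q u)) = (odd (cnt k vs (l Q) (t Q)) \<noteq>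
       ((hc Q u < HH k vs i0 \<and> r (vs (nx k i0)) = l Q) \<noteq> (hc Q u < HH k vs j0 \<and> r (vs j0) = l Q)))"
      using local_side[OF cyc i0 uV off adj p1 p2] unfolding oddAB Q_def .
    have G: "odd (cnt k vs (l u) (b u)) = odd (cnt k vs (l Q) (hc Q u))"
      using G1[OF cyc uV off, of "l u" "b u" "l Q" "hc Q u"] True hu lr[OF uV] bt[OF uV] unfolding inbox_def by auto
    show ?thesis using L G True unfolding H1 H2 Q_def by simp
  next
    case False
    hence lu: "l u = r Q" using su by simp
    have ne: "r Q \<noteq> l Q" using lQ by simp
    have p1: "r Q = l (vs i0) \<or> r Q = r (vs i0)" using Q_def by simp
    have p2: "(l e = r Q) \<longleftrightarrow> (if r Q = l (vs i0) then r e = r Q else l e = r Q)" if "e \<in> V" for e using Q_def ne by simp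
    have L: "odd (cnt k vs (r Q) (hc Q u)) = (odd (cnt k vs (r Q) (t Q)) \<noteq>
       ((hc Q u < HH k vs i0 \<and> l (vs (nx k i0)) = r Q) \<noteq> (hc Q u < HH k vs j0 \<and> l (vs j0) = r Q)))"
      using local_side[OF cyc i0 uV off adj p1 p2] unfolding oddAB Q_def .
    have G: "odd (cnt k vs (l u) (b u)) = odd (cnt k vs (r Q) (hc Q u))"
      using G1[OF cyc uV off, of "l u" "b u" "r Q" "hc Q u"] lu hu lr[OF uV] bt[OF uV] unfolding inbox_def by auto
    have T: "cnt k vs (r Q) (t Q) = cnt k vs (l Q) (t Q)" using top_move[OF cyc i0(1)] Q_def by simp
    have s1': "(l (vs (nx k i0)) = r Q) = ((r (vs (nx k i0)) = l Q) = (r u = l Q))" using s1 False by auto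
    have s2': "(l (vs j0) = r Q) = ((r (vs j0) = l Q) = (r u = l Q))" using s2 False by auto
    have "odd (cnt k vs (l u) (b u)) = (odd (cnt k vs (l Q) (t Q)) \<noteq>
      ((hc Q u < hc Q (vs (nx k i0)) \<and> (r (vs (nx k i0)) = l Q) = (r u = l Q))
       \<noteq> (hc Q u < hc Q (vs j0) \<and> (r (vs j0) = l Q) = (r u = l Q))))"
      using L G T s1' s2' unfolding H1 H2 by simp
    thus ?thesis unfolding Q_def .
  qed
qed

lemma adj_par: assumes cyc: "iscyc k vs" and uV: "u \<in> V" and wV: "w \<in> V"
  and offu: "u \<notin> vs ` {..<k}" and offw: "w \<notin> vs ` {..<k}" and uw: "u \<noteq> w" and e: "E u w"
  shows "odd (cnt k vs (l u) (b u)) = odd (cnt k vs (l w) (b w))"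
proof -
  have a: "r u = l w \<or> r w = l u" using adjc[OF uV wV uw e] by blast
  have h: "b u < hc u w \<and> hc u w < t u \<and> b w < hc u w \<and> hc u w < t w" using hc_in[OF uV wV uw e] .
  have l1: "l u < r u" "l w < r w" using lr uV wV by auto
  obtain x where x: "inbox u x (hc u w)" "inbox w x (hc u w)"
  proof (cases "r u = l w")
    case True show ?thesis using that[of "r u"] True h l1 unfolding inbox_def by auto
  next
    case False hence "r w = l u" using a by simp
    thus ?thesis using that[of "r w"] h l1 unfolding inbox_def by auto
  qed
  have "inbox u (l u) (b u)" "inbox w (l w) (b w)" using l1 bt[OF uV] bt[OF wV] unfolding inbox_def by auto
  thus ?thesis using G1[OF cyc uV offu, of "l u" "b u" x "hc u w"] G1[OF cyc wV offw, of "l w" "b w" x "hc u w"] x by simp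
qed

lemma stepA:
  assumes cyc: "iscyc k vs" and fin: "finite V"
    and S_def: "S = {w \<in> V. w \<notin> vs ` {..<k} \<and> odd (cnt k vs (l w) (b w))}"
    and ne: "S \<noteq> {}" and nb: "\<And>i. i < k \<Longrightarrow> \<exists>p\<in>S. E (vs i) p"
  shows False
proof -
  have k0: "0 < k" using cyc unfolding iscyc_def by auto
  have finS: "finite S" using fin S_def by auto
  obtain ws where ws: "ws \<in> S" "\<And>w. w \<in> S \<Longrightarrow> t w \<le> t ws"
  proof -
    have "Max (t ` S) \<in> t ` S" using finS ne by simp
    then obtain ws where "ws \<in> S" "t ws = Max (t ` S)" by auto
    thus ?thesis using that finS by auto
  qed
  have wsV: "ws \<in> V" and wsoff: "ws \<notin> vs ` {..<k}" and wsodd: "odd (cnt k vs (l ws) (b ws))"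
    using ws(1) S_def by auto
  define F where "F = l ` V \<union> r ` V"
  have finF: "finite F" using fin F_def by auto
  have "infinite ({l ws<..<r ws} - F)" using Diff_infinite_finite[OF finF] lr[OF wsV] by simp
  then obtain x where x: "l ws < x" "x < r ws" "x \<notin> F" by (metis Diff_iff greaterThanLessThan_iff infinite_imp_nonempty ex_in_conv)
  have xstrict: "l v < x \<and> x < r v" if "v \<in> V" "l v \<le> x" "x \<le> r v" for v
    using that x(3) unfolding F_def by (metis UnCI image_eqI order_le_less)
  have ibws: "inbox ws x (t ws)" using x bt[OF wsV] unfolding inbox_def by auto
  have oddt: "odd (cnt k vs x (t ws))"
    using G1[OF cyc wsV wsoff, of "l ws" "b ws" x "t ws"] wsodd ibws lr[OF wsV] bt[OF wsV] unfolding inbox_def by auto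
  have nocross: "odd (cnt k vs x Y)"
    if Y: "t ws \<le> Y" "\<And>v. v \<in> V \<Longrightarrow> v \<in> vs ` {..<k} \<Longrightarrow> l v \<le> x \<Longrightarrow> x \<le> r v \<Longrightarrow> t ws < b v \<Longrightarrow> Y \<le> b v" for Y
  proof -
    have intc: "False" if v: "v \<in> V" "v \<in> vs ` {..<k}" "l v < x" "x < r v" "b v < h" "h < t v" "t ws < h" "h \<le> Y" for v h
    proof -
      have vws: "v \<noteq> ws" using v(2) wsoff by auto
      consider "b v < t ws" | "b v = t ws" | "t ws < b v" by linarith
      thus False
      proof cases
        case 1 thus False using int_box[OF v(1) wsV vws v(3) v(4), of "t ws"] ibws v by linarith
      next
        case 2
        have "(r v = l ws \<or> r ws = l v)" using I[OF v(1) wsV vws] v x 2 bt[OF wsV] by auto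
        thus False using v x by auto
      next
        case 3 thus False using Y(2)[OF v(1) v(2)] v by auto
      qed
    qed
    have "(\<Sum>j<k. if t ws < HH k vs j \<and> HH k vs j \<le> Y \<and> (mid (vs j) < x) \<noteq> (mid (vs (nx k j)) < x) then 1 else 0) = (0::nat)"
    proof (rule sum.neutral, intro ballI)
      fix j assume "j \<in> {..<k}" hence jk: "j < k" by auto
      note cb = cyc_basic[OF cyc jk]
      have hh: "b (vs j) < HH k vs j \<and> HH k vs j < t (vs j) \<and> b (vs (nx k j)) < HH k vs j \<and> HH k vs j < t (vs (nx k j))"
        using HH_in[OF cyc jk] .
      show "(if t ws < HH k vs j \<and> HH k vs j \<le> Y \<and> (mid (vs j) < x) \<noteq> (mid (vs (nx k j)) < x) then 1 else 0) = (0::nat)"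
      proof (rule ccontr)
        assume "\<not> ?thesis"
        hence c: "t ws < HH k vs j" "HH k vs j \<le> Y" "(mid (vs j) < x) \<noteq> (mid (vs (nx k j)) < x)" by (auto split: if_splits)
        have mm: "min (mid (vs j)) (mid (vs (nx k j))) < x" "x \<le> max (mid (vs j)) (mid (vs (nx k j)))"
          using c(3) by (auto simp: min_def max_def)
        have im: "vs j \<in> vs ` {..<k}" "vs (nx k j) \<in> vs ` {..<k}" using jk cb by auto
        from seg[OF cyc jk mm] show False
        proof (elim disjE)
          assume "l (vs j) < x \<and> x < r (vs j)"
          thus False using intc[of "vs j" "HH k vs j"] cb im hh c by blast
        next
          assume "l (vs (nx k j)) < x \<and> x < r (vs (nx k j))"
          thus False using intc[of "vs (nx k j)" "HH k vs j"] cb im hh c by blast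
        next
          assume "r (vs j) = x \<and> l (vs (nx k j)) = x"
          thus False using x(3) cb unfolding F_def by auto
        next
          assume "r (vs (nx k j)) = x \<and> l (vs j) = x"
          thus False using x(3) cb unfolding F_def by auto
        qed
      qed
    qed
    hence "odd (cnt k vs x (t ws)) = odd (cnt k vs x Y)"
      using vmove[OF k0 Y(1), of "\<lambda>i. mid (vs i)" "HH k vs" x] unfolding cnt_def by simp
    thus ?thesis using oddt by simp
  qed
  define C where "C = {v \<in> V. l v \<le> x \<and> x \<le> r v \<and> t ws < b v}"
  show False
  proof (cases "C = {}")
    case True
    define Y where "Y = Max (t ` V) + 1"
    have tle: "t v < Y" if "v \<in> V" for v
    proof -
      have "t v \<le> Max (t ` V)" using Max_ge fin that by auto
      thus ?thesis unfolding Y_def by simp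
    qed
    have "t ws \<le> Y" using tle[OF wsV] by simp
    moreover have "\<And>v. v \<in> V \<Longrightarrow> v \<in> vs ` {..<k} \<Longrightarrow> l v \<le> x \<Longrightarrow> x \<le> r v \<Longrightarrow> t ws < b v \<Longrightarrow> Y \<le> b v"
      using True unfolding C_def by auto
    ultimately have o: "odd (cnt k vs x Y)" by (rule nocross)
    have "cnt k vs x Y = 0" unfolding cnt_def cntg_def
    proof (rule sum.neutral, intro ballI)
      fix i assume "i \<in> {..<k}" hence ik: "i < k" by auto
      note cb = cyc_basic[OF cyc ik]
      have "HH k vs i < Y" "HH k vs (nx k i) < Y" using HH_in[OF cyc ik] HH_in[OF cyc cb(6)] tle cb cyc_basic[OF cyc cb(6)]
        by (meson less_trans)+
      hence "\<not> ih Y (HH k vs i) (HH k vs (nx k i))" unfolding ih_def by auto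
      thus "(if mid (vs (nx k i)) < x \<and> ih Y (HH k vs i) (HH k vs (nx k i)) then 1 else 0) = (0::nat)" by simp
    qed
    thus False using o by simp
  next
    case False
    have finC: "finite C" using fin C_def by auto
    have "Min (b ` C) \<in> b ` C" using finC False by simp
    then obtain v0 where v0: "v0 \<in> C" "b v0 = Min (b ` C)" by auto
    have v0min: "b v0 \<le> b v" if "v \<in> C" for v using v0(2) finC that by simp
    have v0V: "v0 \<in> V" and v0x: "l v0 \<le> x" "x \<le> r v0" and v0b: "t ws < b v0" using v0(1) C_def by auto
    have o: "odd (cnt k vs x (b v0))"
    proof (rule nocross)
      show "t ws \<le> b v0" using v0b by simp
      fix v assume "v \<in> V" "v \<in> vs ` {..<k}" "l v \<le> x" "x \<le> r v" "t ws < b v"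
      thus "b v0 \<le> b v" using v0min C_def by auto
    qed
    have xs: "l v0 < x \<and> x < r v0" using xstrict[OF v0V v0x] .
    show False
    proof (cases "v0 \<in> vs ` {..<k}")
      case False
      have "odd (cnt k vs (l v0) (b v0))"
        using G1[OF cyc v0V False, of "l v0" "b v0" x "b v0"] o xs bt[OF v0V] unfolding inbox_def by auto
      hence "v0 \<in> S" using S_def v0V False by auto
      hence "t v0 \<le> t ws" using ws(2) by auto
      thus False using v0b bt[OF v0V] by auto
    next
      case True
      then obtain i where i: "i < k" "v0 = vs i" by auto
      obtain p where p: "p \<in> S" "E (vs i) p" using nb[OF i(1)] by auto
      have pV: "p \<in> V" and poff: "p \<notin> vs ` {..<k}" using p S_def by auto
      have "p \<noteq> v0" using poff True by auto
      hence "b v0 < t p" using adjc[OF v0V pV] p(2) i by auto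
      moreover have "t p \<le> t ws" using ws(2) p by auto
      ultimately show False using v0b by auto
    qed
  qed
qed

end



definition fvs :: "nat \<Rightarrow> nat \<Rightarrow> nat \<Rightarrow> nat \<Rightarrow> wv" where
  "fvs d i1 i2 n = (if n = 0 then Apex 0 else if n \<le> d then Sub 0 i1 (n - 1) else if n = d + 1 then Cyc i1
     else if n = d + 2 then Cyc i2 else Sub 0 i2 (2 * d + 2 - n))"

lemma fvs_img: "fvs d i1 i2 n = Cyc i \<Longrightarrow> i = i1 \<or> i = i2"
  "fvs d i1 i2 n = Apex a \<Longrightarrow> a = 0"
  "fvs d i1 i2 n = Sub a i j \<Longrightarrow> a = 0 \<and> (i = i1 \<or> i = i2)"
  unfolding fvs_def by (auto split: if_splits)

lemma fvs_img': "Cyc i = fvs d i1 i2 n \<Longrightarrow> i = i1 \<or> i = i2"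
  "Apex a = fvs d i1 i2 n \<Longrightarrow> a = 0"
  "Sub a i j = fvs d i1 i2 n \<Longrightarrow> a = 0 \<and> (i = i1 \<or> i = i2)"
  using fvs_img by metis+

lemma adj_sym: "wp_adj g u v = wp_adj g v u" unfolding wp_adj_def by auto

lemma adj_cyc: "i < g \<Longrightarrow> wp_adj g (Cyc i) (Cyc (Suc i mod g))" unfolding wp_adj_def by simp
lemma adj_apex: "a < 2 \<Longrightarrow> i < g \<Longrightarrow> 0 < g div 2 \<Longrightarrow> wp_adj g (Apex a) (Sub a i 0)" unfolding wp_adj_def by simp
lemma adj_sub: "a < 2 \<Longrightarrow> i < g \<Longrightarrow> Suc j < g div 2 \<Longrightarrow> wp_adj g (Sub a i j) (Sub a i (Suc j))" unfolding wp_adj_def by simp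
lemma adj_last: "a < 2 \<Longrightarrow> i < g \<Longrightarrow> Suc j = g div 2 \<Longrightarrow> wp_adj g (Sub a i j) (Cyc i)" unfolding wp_adj_def by simp

lemma mem_cyc: "i < g \<Longrightarrow> Cyc i \<in> wp_verts g" unfolding wp_verts_def by auto
lemma mem_apex: "a < 2 \<Longrightarrow> Apex a \<in> wp_verts g" unfolding wp_verts_def by auto
lemma mem_sub: "a < 2 \<Longrightarrow> i < g \<Longrightarrow> j < g div 2 \<Longrightarrow> Sub a i j \<in> wp_verts g" unfolding wp_verts_def by auto

lemma fin_verts: "finite (wp_verts g)"
proof -
  have s: "{Sub a i j | a i j. a < 2 \<and> i < g \<and> j < g div 2} \<subseteq> (\<lambda>(a,i,j). Sub a i j) ` ({..<2} \<times> {..<g} \<times> {..<g div 2})"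
  proof
    fix v assume "v \<in> {Sub a i j | a i j. a < 2 \<and> i < g \<and> j < g div 2}"
    then obtain a i j where "v = Sub a i j" "a < 2" "i < g" "j < g div 2" by blast
    thus "v \<in> (\<lambda>(a,i,j). Sub a i j) ` ({..<2} \<times> {..<g} \<times> {..<g div 2})"
      by (intro image_eqI[of _ _ "(a,i,j)"]) auto
  qed
  have "finite {Sub a i j | a i j. a < 2 \<and> i < g \<and> j < g div 2}" by (rule finite_subset[OF s]) auto
  moreover have "{Cyc i | i. i < g} = Cyc ` {..<g}" "{Apex a | a. a < 2} = Apex ` {..<2}" by auto
  ultimately show ?thesis unfolding wp_verts_def by simp
qed

lemma four: fixes sa sb sp sq :: bool and ya yb yp yq :: real
 assumes "sa = sb \<Longrightarrow> ya \<noteq> yb" "sa = sp \<Longrightarrow> ya \<noteq> yp" "sa = sq \<Longrightarrow> ya \<noteq> yq" "sb = sp \<Longrightarrow> yb \<noteq> yp" "sb = sq \<Longrightarrow> yb \<noteq> yq" "sp = sq \<Longrightarrow> yp \<noteq> yq"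
 and h1: "((sp = sa \<and> ya < yp) \<noteq> (sb = sa \<and> ya < yb)) = ((sp = sq \<and> yq < yp) \<noteq> (sb = sq \<and> yq < yb))"
 and h2: "((sp = sb \<and> yb < yp) \<noteq> (sa = sb \<and> yb < ya)) = ((sp = sq \<and> yq < yp) \<noteq> (sa = sq \<and> yq < ya))"
 shows "((sa = sp \<and> yp < ya) \<noteq> (sb = sp \<and> yp < yb)) \<noteq> ((sa = sq \<and> yq < ya) \<noteq> (sb = sq \<and> yq < yb))"
  using assms by smt

locale wrep = rrep "wp_verts g" "wp_adj g" l r b t for g :: nat and l r b t :: "wv \<Rightarrow> real" +
  assumes g3: "3 \<le> g"
begin

lemma d1: "1 \<le> g div 2" using g3 by auto

lemma cycG: "iscyc g Cyc"
  unfolding iscyc_def using g3 by (auto simp: mem_cyc adj_cyc nx_def inj_on_def)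

lemma cycF: assumes "i1 < g" "i2 < g" "i1 \<noteq> i2" "wp_adj g (Cyc i1) (Cyc i2)"
  shows "iscyc (2 * (g div 2) + 3) (fvs (g div 2) i1 i2)"
proof -
  define d where "d = g div 2"
  have d: "1 \<le> d" using d1 d_def by simp
  have V: "fvs d i1 i2 n \<in> wp_verts g" if "n < 2 * d + 3" for n
    using that assms d unfolding fvs_def d_def by (auto simp: mem_cyc mem_apex mem_sub)
  have E: "wp_adj g (fvs d i1 i2 n) (fvs d i1 i2 (nx (2 * d + 3) n))" if n: "n < 2 * d + 3" for n
  proof -
    consider "n = 0" | "1 \<le> n \<and> n < d" | "n = d" | "n = d + 1" | "n = d + 2" | "d + 3 \<le> n \<and> n < 2 * d + 2" | "n = 2 * d + 2"
      using n d by linarith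
    thus ?thesis
    proof cases
      case 1 thus ?thesis using d assms unfolding fvs_def nx_def d_def by (simp add: adj_apex)
    next
      case 2
      hence "nx (2 * d + 3) n = Suc n" unfolding nx_def by simp
      moreover have "wp_adj g (Sub 0 i1 (n - 1)) (Sub 0 i1 (Suc (n - 1)))" using adj_sub[of 0 i1 g "n - 1"] 2 assms d_def by simp
      ultimately show ?thesis using 2 unfolding fvs_def by auto
    next
      case 3
      hence "nx (2 * d + 3) n = Suc d" unfolding nx_def by simp
      moreover have "wp_adj g (Sub 0 i1 (d - 1)) (Cyc i1)" using adj_last[of 0 i1 g "d - 1"] d assms d_def by simp
      ultimately show ?thesis using 3 d unfolding fvs_def by auto
    next
      case 4
      hence "nx (2 * d + 3) n = d + 2" unfolding nx_def by simp
      thus ?thesis using 4 assms(4) unfolding fvs_def by auto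
    next
      case 5
      hence "nx (2 * d + 3) n = d + 3" unfolding nx_def using d by simp
      moreover have "wp_adj g (Cyc i2) (Sub 0 i2 (d - 1))" using adj_last[of 0 i2 g "d - 1"] d assms d_def adj_sym by simp
      moreover have "2 * d + 2 - (d + 3) = d - 1" using d by simp
      ultimately show ?thesis using 5 d unfolding fvs_def by auto
    next
      case 6
      hence "nx (2 * d + 3) n = Suc n" unfolding nx_def by simp
      moreover have "wp_adj g (Sub 0 i2 (2 * d + 2 - n)) (Sub 0 i2 (2 * d + 2 - Suc n))"
      proof -
        have "Suc (2 * d + 2 - Suc n) = 2 * d + 2 - n" using 6 by arith
        moreover have "Suc (2 * d + 2 - Suc n) < g div 2" using 6 d_def by arith
        ultimately have "wp_adj g (Sub 0 i2 (2 * d + 2 - Suc n)) (Sub 0 i2 (2 * d + 2 - n))"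
          using adj_sub[of 0 i2 g "2 * d + 2 - Suc n"] assms by simp
        thus ?thesis using adj_sym by metis
      qed
      ultimately show ?thesis using 6 d unfolding fvs_def by auto
    next
      case 7
      hence "Suc n = 2 * d + 3" by simp
      hence "nx (2 * d + 3) n = 0" unfolding nx_def by (simp only: mod_self)
      moreover have "wp_adj g (Sub 0 i2 0) (Apex 0)" using adj_apex[of 0 i2 g] assms d d_def adj_sym by simp
      ultimately show ?thesis using 7 d unfolding fvs_def by auto
    qed
  qed
  have I: "inj_on (fvs d i1 i2) {..<2 * d + 3}"
    unfolding inj_on_def fvs_def using assms(3) by (auto split: if_splits)
  show ?thesis unfolding iscyc_def d_def[symmetric] using V E I by auto
qed


lemma lf: assumes "iscyc k vs" "i0 < k" "j0 < k" "nx k j0 = i0" "vs i0 = Q" "vs (nx k i0) = e1" "vs j0 = e2"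
   "u \<in> wp_verts g" "u \<notin> vs ` {..<k}" "wp_adj g u Q"
  shows "odd (cnt k vs (l u) (b u)) = (odd (cnt k vs (l Q) (t Q)) \<noteq>
     ((hc Q u < hc Q e1 \<and> (r e1 = l Q) = (r u = l Q)) \<noteq> (hc Q u < hc Q e2 \<and> (r e2 = l Q) = (r u = l Q))))"
proof -
  have "wp_adj g u (vs i0)" using assms(5,10) by simp
  from local_formula[OF assms(1-4,8,9) this] show ?thesis using assms(5-7) by simp
qed

lemma chain: assumes "iscyc k vs" "a < 2" "Apex a \<notin> vs ` {..<k}" "\<And>i j. Sub a i j \<notin> vs ` {..<k}" "i < g"
  shows "j < g div 2 \<Longrightarrow> odd (cnt k vs (l (Sub a i j)) (b (Sub a i j))) = odd (cnt k vs (l (Apex a)) (b (Apex a)))"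
proof (induction j)
  case 0
  show ?case using adj_par[OF assms(1) mem_sub[OF assms(2,5) 0] mem_apex[OF assms(2)] assms(4) assms(3)]
    adj_apex[OF assms(2,5)] 0 adj_sym by auto
next
  case (Suc j)
  have j: "j < g div 2" using Suc.prems by simp
  have "odd (cnt k vs (l (Sub a i (Suc j))) (b (Sub a i (Suc j)))) = odd (cnt k vs (l (Sub a i j)) (b (Sub a i j)))"
    using adj_par[OF assms(1) mem_sub[OF assms(2,5) Suc.prems] mem_sub[OF assms(2,5) j] assms(4) assms(4)]
      adj_sub[OF assms(2,5) Suc.prems] adj_sym by auto
  thus ?case using Suc.IH[OF j] by simp
qed

lemma hc_dist: assumes "Q \<in> wp_verts g" "e \<in> wp_verts g" "u \<in> wp_verts g" "e \<noteq> Q" "u \<noteq> Q" "e \<noteq> u"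
  "wp_adj g e Q" "wp_adj g u Q" "(r e = l Q) = (r u = l Q)" shows "hc Q e \<noteq> hc Q u"
proof
  assume eq: "hc Q e = hc Q u"
  have he: "b e < hc Q e \<and> hc Q e < t e" using hc_in[OF assms(2,1,4,7)] hc_sym by auto
  have hu: "b u < hc Q u \<and> hc Q u < t u" using hc_in[OF assms(3,1,5,8)] hc_sym by auto
  have se: "(r e = l Q) \<noteq> (l e = r Q)" using nb_side[OF assms(2,1,4)] assms(7) by auto
  have su: "(r u = l Q) \<noteq> (l u = r Q)" using nb_side[OF assms(3,1,5)] assms(8) by auto
  have lre: "l e < r e" "l u < r u" using lr assms(2,3) by auto
  have nd: "\<not> (l e < r u \<and> l u < r e \<and> b e < t u \<and> b u < t e)" using D[OF assms(2,3,6)] .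
  show False
  proof (cases "r e = l Q")
    case True thus False using nd assms(9) lre he hu eq by auto
  next
    case False thus False using nd assms(9) lre he hu eq se su by auto
  qed
qed

theorem contradiction: False
proof -
  define d where "d = g div 2"
  have d: "1 \<le> d" using d1 d_def by simp
  define Q where "Q = Cyc 0"
  define A where "A = Cyc (g - 1)"
  define Bv where "Bv = Cyc 1"
  define P where "P = Sub 0 0 (d - 1)"
  define Qn where "Qn = Sub 1 0 (d - 1)"
  have g0: "0 < g" "1 < g" "g - 1 < g" "g - 1 \<noteq> 0" "g - 1 \<noteq> 1" using g3 by auto
  have dd: "d - 1 < g div 2" "Suc (d - 1) = g div 2" using d d_def by auto
  have QV: "Q \<in> wp_verts g" and AV: "A \<in> wp_verts g" and BV: "Bv \<in> wp_verts g"
    and PV: "P \<in> wp_verts g" and QnV: "Qn \<in> wp_verts g"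
    unfolding Q_def A_def Bv_def P_def Qn_def using g0 dd by (auto intro: mem_cyc mem_sub)
  have EAQ: "wp_adj g A Q" using adj_cyc[OF g0(3)] g0 unfolding A_def Q_def by simp
  have EBQ: "wp_adj g Bv Q" using adj_cyc[OF g0(1)] g0 adj_sym unfolding Bv_def Q_def by (simp add: adj_sym)
  have EPQ: "wp_adj g P Q" using adj_last[of 0 0 g "d - 1"] g0 dd unfolding P_def Q_def by simp
  have EQnQ: "wp_adj g Qn Q" using adj_last[of 1 0 g "d - 1"] g0 dd unfolding Qn_def Q_def by simp
  have ne: "A \<noteq> Q" "Bv \<noteq> Q" "P \<noteq> Q" "Qn \<noteq> Q" "A \<noteq> Bv" "A \<noteq> P" "A \<noteq> Qn" "Bv \<noteq> P" "Bv \<noteq> Qn" "P \<noteq> Qn"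
    unfolding Q_def A_def Bv_def P_def Qn_def using g0 by auto
  define K where "K = 2 * d + 3"
  define f1 where "f1 = fvs d 0 1"
  define f2 where "f2 = fvs d 0 (g - 1)"
  have c1: "iscyc K f1" unfolding K_def f1_def d_def using cycF[of 0 1] g0 adj_cyc[OF g0(1)] by simp
  have c2: "iscyc K f2" unfolding K_def f2_def d_def using cycF[of 0 "g - 1"] g0 adj_cyc[OF g0(3)] adj_sym by simp
  have cG: "iscyc g Cyc" by (rule cycG)
  have Ki: "d + 1 < K" "d < K" "nx K d = d + 1" "nx K (d + 1) = d + 2" unfolding K_def nx_def by auto
  have f1v: "f1 (d + 1) = Q" "f1 (d + 2) = Bv" "f1 d = P" unfolding f1_def fvs_def Q_def Bv_def P_def using d by auto
  have f2v: "f2 (d + 1) = Q" "f2 (d + 2) = A" "f2 d = P" unfolding f2_def fvs_def Q_def A_def P_def using d by auto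
  have Gi: "0 < g" "g - 1 < g" "nx g (g - 1) = 0" "nx g 0 = 1" unfolding nx_def using g3 by auto
  have off1: "A \<notin> f1 ` {..<K}" "Qn \<notin> f1 ` {..<K}" "Apex 1 \<notin> f1 ` {..<K}" "\<And>i j. Sub 1 i j \<notin> f1 ` {..<K}"
    unfolding f1_def A_def Qn_def using g0 by (auto dest!: fvs_img') 
  have off2: "Bv \<notin> f2 ` {..<K}" "Qn \<notin> f2 ` {..<K}" "Apex 1 \<notin> f2 ` {..<K}" "\<And>i j. Sub 1 i j \<notin> f2 ` {..<K}"
    unfolding f2_def Bv_def Qn_def using g0 by (auto dest!: fvs_img')
  have offG: "P \<notin> Cyc ` {..<g}" "Qn \<notin> Cyc ` {..<g}" "\<And>a. Apex a \<notin> Cyc ` {..<g}" "\<And>a i j. Sub a i j \<notin> Cyc ` {..<g}"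
    unfolding P_def Qn_def by auto
  have L1A: "odd (cnt K f1 (l A) (b A)) = (odd (cnt K f1 (l Q) (t Q)) \<noteq>
     ((hc Q A < hc Q Bv \<and> (r Bv = l Q) = (r A = l Q)) \<noteq> (hc Q A < hc Q P \<and> (r P = l Q) = (r A = l Q))))"
    using lf[OF c1 Ki(1,2,3) f1v(1) _ f1v(3) AV off1(1) EAQ] Ki(4) f1v(2) by simp
  have L1Q: "odd (cnt K f1 (l Qn) (b Qn)) = (odd (cnt K f1 (l Q) (t Q)) \<noteq>
     ((hc Q Qn < hc Q Bv \<and> (r Bv = l Q) = (r Qn = l Q)) \<noteq> (hc Q Qn < hc Q P \<and> (r P = l Q) = (r Qn = l Q))))"
    using lf[OF c1 Ki(1,2,3) f1v(1) _ f1v(3) QnV off1(2) EQnQ] Ki(4) f1v(2) by simp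
  have L2B: "odd (cnt K f2 (l Bv) (b Bv)) = (odd (cnt K f2 (l Q) (t Q)) \<noteq>
     ((hc Q Bv < hc Q A \<and> (r A = l Q) = (r Bv = l Q)) \<noteq> (hc Q Bv < hc Q P \<and> (r P = l Q) = (r Bv = l Q))))"
    using lf[OF c2 Ki(1,2,3) f2v(1) _ f2v(3) BV off2(1) EBQ] Ki(4) f2v(2) by simp
  have L2Q: "odd (cnt K f2 (l Qn) (b Qn)) = (odd (cnt K f2 (l Q) (t Q)) \<noteq>
     ((hc Q Qn < hc Q A \<and> (r A = l Q) = (r Qn = l Q)) \<noteq> (hc Q Qn < hc Q P \<and> (r P = l Q) = (r Qn = l Q))))"
    using lf[OF c2 Ki(1,2,3) f2v(1) _ f2v(3) QnV off2(2) EQnQ] Ki(4) f2v(2) by simp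
  have LGP: "odd (cnt g Cyc (l P) (b P)) = (odd (cnt g Cyc (l Q) (t Q)) \<noteq>
     ((hc Q P < hc Q Bv \<and> (r Bv = l Q) = (r P = l Q)) \<noteq> (hc Q P < hc Q A \<and> (r A = l Q) = (r P = l Q))))"
    using lf[OF cG Gi(1,2,3) _ _ _ PV offG(1) EPQ] Gi(4) unfolding Q_def Bv_def A_def by simp
  have LGQ: "odd (cnt g Cyc (l Qn) (b Qn)) = (odd (cnt g Cyc (l Q) (t Q)) \<noteq>
     ((hc Q Qn < hc Q Bv \<and> (r Bv = l Q) = (r Qn = l Q)) \<noteq> (hc Q Qn < hc Q A \<and> (r A = l Q) = (r Qn = l Q))))"
    using lf[OF cG Gi(1,2,3) _ _ _ QnV offG(2) EQnQ] Gi(4) unfolding Q_def Bv_def A_def by simp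
  have S1: "Sub 1 (g - 1) (d - 1) \<in> wp_verts g" "Sub 1 1 (d - 1) \<in> wp_verts g" using g0 dd by (auto intro: mem_sub)
  have ES1: "wp_adj g (Sub 1 (g - 1) (d - 1)) A" "wp_adj g (Sub 1 1 (d - 1)) Bv"
    using adj_last[of 1 "g - 1" g "d - 1"] adj_last[of 1 1 g "d - 1"] g0 dd unfolding A_def Bv_def by auto
  have P1: "odd (cnt K f1 (l A) (b A)) = odd (cnt K f1 (l Qn) (b Qn))"
  proof -
    have "odd (cnt K f1 (l A) (b A)) = odd (cnt K f1 (l (Sub 1 (g - 1) (d - 1))) (b (Sub 1 (g - 1) (d - 1))))"
      using adj_par[OF c1 AV S1(1) off1(1) off1(4)] ES1(1) adj_sym unfolding A_def by auto
    also have "\<dots> = odd (cnt K f1 (l (Apex 1)) (b (Apex 1)))" using chain[OF c1 _ off1(3) off1(4) g0(3) dd(1)] by simp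
    also have "\<dots> = odd (cnt K f1 (l Qn) (b Qn))" using chain[OF c1 _ off1(3) off1(4) g0(1) dd(1)] unfolding Qn_def by simp
    finally show ?thesis .
  qed
  have P2: "odd (cnt K f2 (l Bv) (b Bv)) = odd (cnt K f2 (l Qn) (b Qn))"
  proof -
    have "odd (cnt K f2 (l Bv) (b Bv)) = odd (cnt K f2 (l (Sub 1 1 (d - 1))) (b (Sub 1 1 (d - 1))))"
      using adj_par[OF c2 BV S1(2) off2(1) off2(4)] ES1(2) adj_sym unfolding Bv_def by auto
    also have "\<dots> = odd (cnt K f2 (l (Apex 1)) (b (Apex 1)))" using chain[OF c2 _ off2(3) off2(4) g0(2) dd(1)] by simp
    also have "\<dots> = odd (cnt K f2 (l Qn) (b Qn))" using chain[OF c2 _ off2(3) off2(4) g0(1) dd(1)] unfolding Qn_def by simp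
    finally show ?thesis .
  qed
  have dist: "\<And>e u. e \<in> {A, Bv, P, Qn} \<Longrightarrow> u \<in> {A, Bv, P, Qn} \<Longrightarrow> e \<noteq> u \<Longrightarrow> (r e = l Q) = (r u = l Q) \<Longrightarrow> hc Q e \<noteq> hc Q u"
  proof -
    fix e u assume "e \<in> {A, Bv, P, Qn}" "u \<in> {A, Bv, P, Qn}" "e \<noteq> u" "(r e = l Q) = (r u = l Q)"
    moreover have "\<And>x. x \<in> {A, Bv, P, Qn} \<Longrightarrow> x \<in> wp_verts g \<and> x \<noteq> Q \<and> wp_adj g x Q"
      using AV BV PV QnV EAQ EBQ EPQ EQnQ ne by auto
    ultimately show "hc Q e \<noteq> hc Q u" using hc_dist[OF QV] by blast
  qed
  have core: "odd (cnt g Cyc (l P) (b P)) \<noteq> odd (cnt g Cyc (l Qn) (b Qn))"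
  proof -
    have h1: "((r P = l Q) = (r A = l Q) \<and> hc Q A < hc Q P) \<noteq> ((r Bv = l Q) = (r A = l Q) \<and> hc Q A < hc Q Bv)
      = (((r P = l Q) = (r Qn = l Q) \<and> hc Q Qn < hc Q P) \<noteq> ((r Bv = l Q) = (r Qn = l Q) \<and> hc Q Qn < hc Q Bv))"
      using L1A L1Q P1 by auto
    have h2: "((r P = l Q) = (r Bv = l Q) \<and> hc Q Bv < hc Q P) \<noteq> ((r A = l Q) = (r Bv = l Q) \<and> hc Q Bv < hc Q A)
      = (((r P = l Q) = (r Qn = l Q) \<and> hc Q Qn < hc Q P) \<noteq> ((r A = l Q) = (r Qn = l Q) \<and> hc Q Qn < hc Q A))"
      using L2B L2Q P2 by auto
    have "(((r A = l Q) = (r P = l Q) \<and> hc Q P < hc Q A) \<noteq> ((r Bv = l Q) = (r P = l Q) \<and> hc Q P < hc Q Bv)) \<noteq>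
          (((r A = l Q) = (r Qn = l Q) \<and> hc Q Qn < hc Q A) \<noteq> ((r Bv = l Q) = (r Qn = l Q) \<and> hc Q Qn < hc Q Bv))"
      by (rule four[OF _ _ _ _ _ _ h1 h2]) (use dist ne in auto)
    thus ?thesis using LGP LGQ by auto
  qed
  have offGsub: "\<And>a i j. Sub a i j \<notin> Cyc ` {..<g}" "\<And>a. Apex a \<notin> Cyc ` {..<g}" by auto
  have PA: "odd (cnt g Cyc (l P) (b P)) = odd (cnt g Cyc (l (Apex 0)) (b (Apex 0)))"
    using chain[OF cG _ offGsub(2) offGsub(1) g0(1) dd(1)] unfolding P_def by simp
  have QA: "odd (cnt g Cyc (l Qn) (b Qn)) = odd (cnt g Cyc (l (Apex 1)) (b (Apex 1)))"
    using chain[OF cG _ offGsub(2) offGsub(1) g0(1) dd(1)] unfolding Qn_def by simp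
  obtain a where a: "a < (2::nat)" "odd (cnt g Cyc (l (Apex a)) (b (Apex a)))"
    using core PA QA by (metis less_2_cases_iff one_less_numeral_iff semiring_norm(76) zero_less_numeral)
  define S where "S = {w \<in> wp_verts g. w \<notin> Cyc ` {..<g} \<and> odd (cnt g Cyc (l w) (b w))}"
  have inS: "Sub a i (d - 1) \<in> S" if "i < g" for i
    using chain[OF cG a(1) offGsub(2) offGsub(1) that dd(1)] a(2) mem_sub[OF a(1) that dd(1)] offGsub(1)
    unfolding S_def by auto
  show False
  proof (rule stepA[OF cG fin_verts S_def])
    show "S \<noteq> {}" using inS[OF g0(1)] by auto
    fix i assume i: "i < g"
    have "wp_adj g (Cyc i) (Sub a i (d - 1))" using adj_last[OF a(1) i dd(2)] adj_sym by metis
    thus "\<exists>p\<in>S. wp_adj g (Cyc i) p" using inS[OF i] by blast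
  qed
qed

end


theorem mainTheorem5:
  fixes g :: nat
  assumes "g \<ge> 3"
  shows "\<not> cbu2 (wp_verts g) (wp_adj g)"
proof
  assume "cbu2 (wp_verts g) (wp_adj g)"
  then obtain l r b t where rr: "rrep (wp_verts g) (wp_adj g) l r b t" using cbu2_rrep by blast
  have "wrep g l r b t" using rr assms by (simp add: wrep_def wrep_axioms_def)
  then interpret wrep g l r b t .
  show False by (rule contradiction)
qed

end
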